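(* Let $(M,d)$ be a locally compact Hadamard space, $o\in M$, and $f:M\to\mathbb{R}$ a continuous convex function which is unbounded from below and decreases linearly. Let $\tilde f:M\to\mathbb{R}$ be a continuous convex function with $|f-\tilde f|$ bounded. Then $\tilde f$ is unbounded from below and decreases linearly, and $\gamma_{M,o,\tilde f}=\gamma_{M,o,f}$, $a_{M,o,\tilde f}=a_{M,o,f}$.
   Context: For $(M,o,f)$: $x_s$ is the unique minimizer of $f$ on the closed ball $B(o,s)$ and $\gamma_s$ the geodesic from $o$ to $x_s$; $f$ decreases linearly if $\liminf_{s\to\infty}f(x_s)/s<0$. The fastest shrinking geodesic $\gamma_{M,o,f}$ is the pointwise limit of $\gamma_s$ as $s\to\infty$, and the shrinking rate is $a_{M,o,f}=-\lim_{s\to\infty}\frac1s\min_{x\in B(o,s)}f(x)$. *)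

theory Defs
  imports "HOL-Analysis.Analysis"
begin

definition geodesic_seg :: "real \<Rightarrow> (real \<Rightarrow> 'a::metric_space) \<Rightarrow> bool" where
  "geodesic_seg L \<gamma> \<longleftrightarrow> L \<ge> 0 \<and> (\<forall>s\<in>{0..L}. \<forall>t\<in>{0..L}. dist (\<gamma> s) (\<gamma> t) = \<bar>s - t\<bar>)"

definition joins :: "(real \<Rightarrow> 'a::metric_space) \<Rightarrow> 'a \<Rightarrow> 'a \<Rightarrow> bool" where
  "joins \<gamma> x y \<longleftrightarrow> geodesic_seg (dist x y) \<gamma> \<and> \<gamma> 0 = x \<and> \<gamma> (dist x y) = y"

definition hadamard_space :: "'a::metric_space itself \<Rightarrow> bool" where
  "hadamard_space _ \<longleftrightarrow>
     complete (UNIV :: 'a set) \<and>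
     (\<forall>x y::'a. \<exists>\<gamma>. joins \<gamma> x y) \<and>
     (\<forall>x y z::'a. \<forall>\<gamma> t. joins \<gamma> x y \<and> 0 \<le> t \<and> t \<le> 1 \<longrightarrow>
        (dist z (\<gamma> (t * dist x y)))\<^sup>2
          \<le> (1 - t) * (dist z x)\<^sup>2 + t * (dist z y)\<^sup>2 - t * (1 - t) * (dist x y)\<^sup>2)"

definition locally_compact_space :: "'a::metric_space itself \<Rightarrow> bool" where
  "locally_compact_space _ \<longleftrightarrow> (\<forall>x::'a. \<exists>e>0. compact (cball x e))"

definition geod_convex :: "('a::metric_space \<Rightarrow> real) \<Rightarrow> bool" where
  "geod_convex f \<longleftrightarrow> (\<forall>x y \<gamma>. joins \<gamma> x y \<longrightarrow> convex_on {0..dist x y} (f \<circ> \<gamma>))"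

text \<open>Point at distance t (capped at d(x0,x)) from x0 on the geodesic from x0 to x
  (geodesics are unique in a Hadamard space).\<close>
definition geod_pt :: "'a::metric_space \<Rightarrow> 'a \<Rightarrow> real \<Rightarrow> 'a" where
  "geod_pt x0 x t = (THE p. dist x0 p = min t (dist x0 x) \<and> dist p x = dist x0 x - min t (dist x0 x))"

definition ball_min :: "('a::metric_space \<Rightarrow> real) \<Rightarrow> 'a \<Rightarrow> real \<Rightarrow> 'a" where
  "ball_min f x0 s = (THE x. x \<in> cball x0 s \<and> (\<forall>y\<in>cball x0 s. f x \<le> f y))"

definition gamma_s :: "('a::metric_space \<Rightarrow> real) \<Rightarrow> 'a \<Rightarrow> real \<Rightarrow> real \<Rightarrow> 'a" where
  "gamma_s f x0 s t = geod_pt x0 (ball_min f x0 s) t"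

definition decreases_linearly :: "('a::metric_space \<Rightarrow> real) \<Rightarrow> 'a \<Rightarrow> bool" where
  "decreases_linearly f x0 \<longleftrightarrow>
     Liminf at_top (\<lambda>s::real. ereal (f (ball_min f x0 s) / s)) < 0"

end

theory Submission
  imports Defs
begin

section \<open>Geometry\<close>

lemma joins_dist:
  assumes "joins \<gamma> x y" "0 \<le> \<tau>" "\<tau> \<le> dist x y"
  shows "dist x (\<gamma> \<tau>) = \<tau>" "dist (\<gamma> \<tau>) y = dist x y - \<tau>"
proof -
  have g: "\<forall>s\<in>{0..dist x y}. \<forall>t\<in>{0..dist x y}. dist (\<gamma> s) (\<gamma> t) = \<bar>s - t\<bar>"
    "\<gamma> 0 = x" "\<gamma> (dist x y) = y"
    using assms(1) unfolding joins_def geodesic_seg_def by auto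
  have "dist (\<gamma> 0) (\<gamma> \<tau>) = \<bar>0 - \<tau>\<bar>" using g(1) assms by auto
  then show "dist x (\<gamma> \<tau>) = \<tau>" using g(2) assms by simp
  have "dist (\<gamma> \<tau>) (\<gamma> (dist x y)) = \<bar>\<tau> - dist x y\<bar>" using g(1) assms by auto
  then show "dist (\<gamma> \<tau>) y = dist x y - \<tau>" using g(3) assms by simp
qed

lemma joins_dist2:
  assumes "joins \<gamma> x y" "0 \<le> s" "s \<le> dist x y" "0 \<le> t" "t \<le> dist x y"
  shows "dist (\<gamma> s) (\<gamma> t) = \<bar>s - t\<bar>"
  using assms unfolding joins_def geodesic_seg_def by auto

lemma had_joins:
  assumes H: "hadamard_space TYPE('a::metric_space)"
  shows "\<exists>\<gamma>. joins \<gamma> (x::'a) y"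
  using H unfolding hadamard_space_def by blast

lemma had_complete:
  assumes H: "hadamard_space TYPE('a::metric_space)"
  shows "complete (UNIV::'a set)"
  using H unfolding hadamard_space_def by blast

lemma had_cat0:
  assumes H: "hadamard_space TYPE('a::metric_space)"
    and "joins \<gamma> x y" "0 \<le> t" "t \<le> 1"
  shows "(dist (z::'a) (\<gamma> (t * dist x y)))\<^sup>2
          \<le> (1 - t) * (dist z x)\<^sup>2 + t * (dist z y)\<^sup>2 - t * (1 - t) * (dist x y)\<^sup>2"
  using H assms(2-) unfolding hadamard_space_def by blast

lemma geod_unique:
  assumes H: "hadamard_space TYPE('a::metric_space)"
    and j: "joins \<gamma> x y" and t: "0 \<le> \<tau>" "\<tau> \<le> dist x y"
    and p: "dist x (p::'a) = \<tau>" "dist p y = dist x y - \<tau>"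
  shows "p = \<gamma> \<tau>"
proof (cases "dist x y = 0")
  case True
  then have "\<tau> = 0" using t by auto
  then show ?thesis using p j unfolding joins_def by auto
next
  case False
  define d where "d = dist x y"
  have d: "d > 0" using False d_def by auto
  define l where "l = \<tau> / d"
  have l: "0 \<le> l" "l \<le> 1" using t d by (auto simp: l_def d_def)
  have tl: "\<tau> = l * d" using d by (simp add: l_def)
  have "(dist p (\<gamma> (l * d)))\<^sup>2 \<le> (1 - l) * (dist p x)\<^sup>2 + l * (dist p y)\<^sup>2 - l * (1 - l) * d\<^sup>2"
    using had_cat0[OF H j l] unfolding d_def by blast
  also have "\<dots> = (1 - l) * (l*d)\<^sup>2 + l * ((1-l)*d)\<^sup>2 - l * (1 - l) * d\<^sup>2"
  proof -
    have "dist p x = l * d" using p tl by (simp add: dist_commute)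
    moreover have "dist p y = (1 - l) * d" using p tl by (simp add: d_def algebra_simps)
    ultimately show ?thesis by simp
  qed
  also have "\<dots> = 0" by (simp add: power2_eq_square algebra_simps)
  finally have "dist p (\<gamma> (l*d)) = 0" by simp
  then show ?thesis using tl by simp
qed

lemma geod_exists:
  assumes H: "hadamard_space TYPE('a::metric_space)" and t: "0 \<le> t" "t \<le> 1"
  shows "\<exists>p::'a. dist x p = t * dist x y \<and> dist p y = (1 - t) * dist x y"
proof -
  obtain \<gamma> where j: "joins \<gamma> x y" using had_joins[OF H] by blast
  have a: "0 \<le> t * dist x y" "t * dist x y \<le> dist x y" using t
    by (auto simp: mult_left_le_one_le)
  show ?thesis using joins_dist[OF j a] by (intro exI[of _ "\<gamma> (t * dist x y)"]) (auto simp: algebra_simps)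
qed

lemma cat0_pt:
  assumes H: "hadamard_space TYPE('a::metric_space)" and t: "0 \<le> t" "t \<le> 1"
    and p: "dist x (p::'a) = t * dist x y" "dist p y = (1 - t) * dist x y"
  shows "(dist z p)\<^sup>2 \<le> (1 - t) * (dist z x)\<^sup>2 + t * (dist z y)\<^sup>2 - t * (1 - t) * (dist x y)\<^sup>2"
proof -
  obtain \<gamma> where j: "joins \<gamma> x y" using had_joins[OF H] by blast
  have a: "0 \<le> t * dist x y" "t * dist x y \<le> dist x y" using t
    by (auto simp: mult_left_le_one_le)
  have "p = \<gamma> (t * dist x y)"
    by (rule geod_unique[OF H j a]) (use p in \<open>auto simp: algebra_simps\<close>)
  then show ?thesis using had_cat0[OF H j t] by simp
qed

lemma geod_convex_pt:
  assumes H: "hadamard_space TYPE('a::metric_space)" and cv: "geod_convex f" and t: "0 \<le> t" "t \<le> 1"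
    and p: "dist x (p::'a) = t * dist x y" "dist p y = (1 - t) * dist x y"
  shows "f p \<le> (1 - t) * f x + t * f y"
proof -
  obtain \<gamma> where j: "joins \<gamma> x y" using had_joins[OF H] by blast
  have a: "0 \<le> t * dist x y" "t * dist x y \<le> dist x y" using t
    by (auto simp: mult_left_le_one_le)
  have pe: "p = \<gamma> (t * dist x y)"
    by (rule geod_unique[OF H j a]) (use p in \<open>auto simp: algebra_simps\<close>)
  have c: "convex_on {0..dist x y} (f \<circ> \<gamma>)" using cv j unfolding geod_convex_def by blast
  have "(f \<circ> \<gamma>) ((1 - t) *\<^sub>R 0 + t *\<^sub>R dist x y) \<le> (1 - t) * (f \<circ> \<gamma>) 0 + t * (f \<circ> \<gamma>) (dist x y)"
    by (rule convex_onD[OF c t]) auto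
  then show ?thesis using pe j unfolding joins_def by simp
qed

lemma dist_convex_pt:
  assumes H: "hadamard_space TYPE('a::metric_space)" and t: "0 \<le> t" "t \<le> 1"
    and p: "dist x (p::'a) = t * dist x y" "dist p y = (1 - t) * dist x y"
  shows "dist z p \<le> (1 - t) * dist z x + t * dist z y"
proof -
  have c: "(dist z p)\<^sup>2 \<le> (1 - t) * (dist z x)\<^sup>2 + t * (dist z y)\<^sup>2 - t * (1 - t) * (dist x y)\<^sup>2"
    by (rule cat0_pt[OF H t p])
  have tri: "\<bar>dist z x - dist z y\<bar> \<le> dist x y"
    by (metis abs_le_iff dist_commute dist_triangle_le diff_le_eq add.commute minus_diff_eq dist_triangle2)
  have "(dist z x - dist z y)\<^sup>2 \<le> (dist x y)\<^sup>2"
    using tri by (metis abs_le_square_iff abs_of_nonneg zero_le_dist)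
  then have "t * (1 - t) * (dist z x - dist z y)\<^sup>2 \<le> t * (1 - t) * (dist x y)\<^sup>2"
    using t by (intro mult_left_mono) auto
  with c have "(dist z p)\<^sup>2 \<le> ((1 - t) * dist z x + t * dist z y)\<^sup>2"
    by (simp add: power2_eq_square algebra_simps)
  moreover have "0 \<le> (1 - t) * dist z x + t * dist z y" using t by simp
  ultimately show ?thesis using power2_le_imp_le by blast
qed

lemma midpoint_ineq:
  assumes H: "hadamard_space TYPE('a::metric_space)"
    and p: "dist x (p::'a) = dist x y / 2" "dist p y = dist x y / 2"
  shows "(dist z p)\<^sup>2 \<le> (dist z x)\<^sup>2 / 2 + (dist z y)\<^sup>2 / 2 - (dist x y)\<^sup>2 / 4"
  using cat0_pt[OF H, of "1/2" x p y z] p by (simp add: power2_eq_square algebra_simps)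

lemma comparison:
  assumes H: "hadamard_space TYPE('a::metric_space)" and l: "0 \<le> l" "l \<le> 1"
    and p: "dist w (p::'a) = l * dist w x" "dist p x = (1 - l) * dist w x"
    and q: "dist w (q::'a) = l * dist w y" "dist q y = (1 - l) * dist w y"
  shows "dist p q \<le> l * dist x y"
proof -
  define A where "A = dist w x"
  define B where "B = dist w y"
  define c where "c = dist x y"
  have 1: "(dist q p)\<^sup>2 \<le> (1 - l) * (dist q w)\<^sup>2 + l * (dist q x)\<^sup>2 - l * (1 - l) * A\<^sup>2"
    using cat0_pt[OF H l p, of q] unfolding A_def by simp
  have 2: "(dist x q)\<^sup>2 \<le> (1 - l) * (dist x w)\<^sup>2 + l * (dist x y)\<^sup>2 - l * (1 - l) * B\<^sup>2"
    using cat0_pt[OF H l q, of x] unfolding B_def by simp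
  have qo: "dist q w = l * B" using q by (simp add: dist_commute B_def)
  have xo: "dist x w = A" by (simp add: dist_commute A_def)
  have 3: "l * (dist q x)\<^sup>2 \<le> l * ((1 - l) * A\<^sup>2 + l * c\<^sup>2 - l * (1 - l) * B\<^sup>2)"
    using 2 l xo by (intro mult_left_mono) (auto simp: dist_commute c_def)
  have "(dist p q)\<^sup>2 \<le> (l * c)\<^sup>2"
    using 1 3 qo by (simp add: dist_commute power2_eq_square algebra_simps)
  moreover have "0 \<le> l * c" using l by (simp add: c_def)
  ultimately show ?thesis using power2_le_imp_le unfolding c_def by blast
qed

lemma geod_pt_eq:
  assumes H: "hadamard_space TYPE('a::metric_space)" and j: "joins \<gamma> x0 x" and t: "0 \<le> t"
  shows "geod_pt x0 (x::'a) t = \<gamma> (min t (dist x0 x))"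
proof -
  have a: "0 \<le> min t (dist x0 x)" "min t (dist x0 x) \<le> dist x0 x" using t by auto
  show ?thesis unfolding geod_pt_def
  proof (rule the_equality)
    show "dist x0 (\<gamma> (min t (dist x0 x))) = min t (dist x0 x) \<and>
      dist (\<gamma> (min t (dist x0 x))) x = dist x0 x - min t (dist x0 x)"
      using joins_dist[OF j a] by simp
    fix p assume "dist x0 p = min t (dist x0 x) \<and> dist p x = dist x0 x - min t (dist x0 x)"
    then show "p = \<gamma> (min t (dist x0 x))" using geod_unique[OF H j a] by blast
  qed
qed

lemma conv_from_bound:
  fixes g :: "real \<Rightarrow> 'a::metric_space" and e :: "real \<Rightarrow> real"
  assumes comp: "complete (UNIV::'a set)" and el: "(e \<longlongrightarrow> 0) at_top"
    and cb: "\<And>s S. T \<le> s \<Longrightarrow> s \<le> S \<Longrightarrow> dist (g s) (g S) \<le> e s"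
  shows "\<exists>p. (g \<longlongrightarrow> p) at_top"
proof -
  define u where "u n = g (real n)" for n
  have "Cauchy u"
    unfolding Cauchy_def
  proof (intro allI impI)
    fix \<epsilon> :: real assume \<epsilon>: "\<epsilon> > 0"
    have "\<forall>\<^sub>F s in at_top. e s < \<epsilon>" using order_tendstoD(2)[OF el \<epsilon>] .
    then obtain N0 where N0: "\<And>s. s \<ge> N0 \<Longrightarrow> e s < \<epsilon>" unfolding eventually_at_top_linorder by blast
    obtain M :: nat where M: "max N0 T \<le> real M" using real_arch_simple[of "max N0 T"] by (elim exE)
    have M1: "N0 \<le> real M" "T \<le> real M" using M by auto
    have "dist (u m) (u n) < \<epsilon>" if "m \<ge> M" "n \<ge> M" for m n
    proof (cases "m \<le> n")
      case True
      have r: "real M \<le> real m" "real m \<le> real n" using that True by auto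
      have "dist (u m) (u n) \<le> e (real m)" unfolding u_def
        by (rule cb) (use M1 r in linarith)+
      also have "\<dots> < \<epsilon>" by (rule N0) (use M1 r in linarith)
      finally show ?thesis .
    next
      case False
      have r: "real M \<le> real n" "real n \<le> real m" using that False by auto
      have "dist (u n) (u m) \<le> e (real n)" unfolding u_def
        by (rule cb) (use M1 r in linarith)+
      also have "\<dots> < \<epsilon>" by (rule N0) (use M1 r in linarith)
      finally show ?thesis by (simp add: dist_commute)
    qed
    then show "\<exists>M. \<forall>m\<ge>M. \<forall>n\<ge>M. dist (u m) (u n) < \<epsilon>" by blast
  qed
  then obtain p where p: "u \<longlonglongrightarrow> p"
    using comp unfolding complete_def by blast
  have dp: "dist (g s) p \<le> e s" if "T \<le> s" for s
  proof (rule tendsto_le[of sequentially "\<lambda>_. e s" _ "\<lambda>n. dist (g s) (u n)"])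
    show "(\<lambda>n. dist (g s) (u n)) \<longlonglongrightarrow> dist (g s) p"
      by (intro tendsto_intros p)
    obtain N :: nat where N: "s \<le> real N" using real_arch_simple[of s] by (elim exE)
    have "dist (g s) (u n) \<le> e s" if "n \<ge> N" for n
      unfolding u_def by (rule cb) (use that N \<open>T \<le> s\<close> in auto)
    then show "\<forall>\<^sub>F n in sequentially. dist (g s) (u n) \<le> e s"
      unfolding eventually_sequentially by blast
  qed auto
  have "((\<lambda>s. dist (g s) p) \<longlongrightarrow> 0) at_top"
  proof (rule tendsto_sandwich[of "\<lambda>_. 0" _ _ e])
    show "\<forall>\<^sub>F s in at_top. dist (g s) p \<le> e s"
      unfolding eventually_at_top_linorder using dp by blast
  qed (auto intro: el)
  then have "(g \<longlongrightarrow> p) at_top" by (rule tendsto_dist_iff[THEN iffD2])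
  then show ?thesis by blast
qed

section \<open>Minimum function\<close>

locale hconv =
  fixes f :: "'a::metric_space \<Rightarrow> real" and x0 :: 'a
  assumes H: "hadamard_space TYPE('a)"
    and cont: "continuous_on UNIV f" and cvx: "geod_convex f"
    and unb: "\<not> bdd_below (range f)"
begin

definition h :: "real \<Rightarrow> real" where "h s = (INF x\<in>cball x0 s. f x)"

lemma lower_lin: "\<exists>K\<ge>0. \<forall>y. f x0 - 1 - K * dist x0 y \<le> f y"
proof -
  have "isCont f x0" using cont by (simp add: continuous_on_eq_continuous_at)
  then obtain d where d: "d > 0" "\<And>y. dist y x0 < d \<Longrightarrow> dist (f y) (f x0) < 1"
    using cont unfolding continuous_on_iff by (meson UNIV_I zero_less_one)
  have "f x0 - 1 - (2/d) * dist x0 y \<le> f y" for y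
  proof (cases "dist x0 y < d")
    case True
    then have "dist (f y) (f x0) < 1" using d(2)[of y] by (simp add: dist_commute)
    then have "f x0 - 1 \<le> f y" by (simp add: dist_real_def)
    moreover have "0 \<le> (2/d) * dist x0 y" using d by simp
    ultimately show ?thesis by linarith
  next
    case False
    define D where "D = dist x0 y"
    have D: "D \<ge> d" using False D_def by simp
    define t where "t = (d/2) / D"
    have t: "0 \<le> t" "t \<le> 1" "t > 0" using D d by (auto simp: t_def)
    obtain p where p: "dist x0 p = t * dist x0 y" "dist p y = (1 - t) * dist x0 y"
      using geod_exists[OF H t(1,2)] by blast
    have "x0 \<noteq> y" using D d D_def by auto
    then have "dist x0 p = d/2" using p D d by (simp add: t_def D_def)
    then have "dist (f p) (f x0) < 1" using d by (simp add: dist_commute)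
    then have "f x0 - 1 < f p" by (simp add: dist_real_def)
    also have "f p \<le> (1 - t) * f x0 + t * f y" by (rule geod_convex_pt[OF H cvx t(1,2) p])
    finally have "t * (f x0 - f y) < 1" by (simp add: algebra_simps)
    then have "f x0 - f y < 1 / t" using t by (simp add: field_simps)
    moreover have "1 / t = (2/d) * D" using d D by (simp add: t_def)
    ultimately show ?thesis unfolding D_def by linarith
  qed
  then show ?thesis using d by (intro exI[of _ "2/d"]) auto
qed

lemma bdd: "bdd_below (f ` cball x0 s)"
proof -
  obtain K where K: "K \<ge> 0" "\<And>y. f x0 - 1 - K * dist x0 y \<le> f y" using lower_lin by blast
  have "f x0 - 1 - K * s \<le> f y" if "y \<in> cball x0 s" for y
  proof -
    have "K * dist x0 y \<le> K * s" using that K by (intro mult_left_mono) auto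
    then show ?thesis using K(2)[of y] by linarith
  qed
  then show ?thesis by (intro bdd_belowI2) auto
qed

lemma h_le: "y \<in> cball x0 s \<Longrightarrow> h s \<le> f y"
  unfolding h_def by (rule cINF_lower[OF bdd])

lemma h_ge: "0 \<le> s \<Longrightarrow> (\<And>y. y \<in> cball x0 s \<Longrightarrow> c \<le> f y) \<Longrightarrow> c \<le> h s"
  unfolding h_def by (rule cINF_greatest) auto

lemma h_near: assumes "0 \<le> s" "e > 0" shows "\<exists>y\<in>cball x0 s. f y < h s + e"
proof (rule ccontr)
  assume "\<not> ?thesis"
  then have "h s + e \<le> h s" using h_ge[OF assms(1), of "h s + e"] by force
  then show False using assms by simp
qed

lemma h0: "h 0 = f x0"
  unfolding h_def by simp

lemma h_mono: "0 \<le> r \<Longrightarrow> r \<le> s \<Longrightarrow> h s \<le> h r"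
  by (rule h_ge) (auto intro: h_le)

lemma h_conv:
  assumes "0 \<le> a" "0 \<le> b" "0 \<le> t" "t \<le> 1"
  shows "h ((1-t)*a + t*b) \<le> (1-t) * h a + t * h b"
proof (rule field_le_epsilon)
  fix e :: real assume e: "e > 0"
  obtain x where x: "x \<in> cball x0 a" "f x < h a + e" using h_near[OF assms(1) e] by blast
  obtain y where y: "y \<in> cball x0 b" "f y < h b + e" using h_near[OF assms(2) e] by blast
  obtain p where p: "dist x p = t * dist x y" "dist p y = (1 - t) * dist x y"
    using geod_exists[OF H assms(3,4)] by blast
  have "dist x0 p \<le> (1-t) * dist x0 x + t * dist x0 y" by (rule dist_convex_pt[OF H assms(3,4) p])
  also have "\<dots> \<le> (1-t)*a + t*b"
    using x y assms by (intro add_mono mult_left_mono) auto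
  finally have "h ((1-t)*a + t*b) \<le> f p" by (intro h_le) simp
  also have "f p \<le> (1 - t) * f x + t * f y" by (rule geod_convex_pt[OF H cvx assms(3,4) p])
  also have "\<dots> \<le> (1-t) * (h a + e) + t * (h b + e)"
    using x y assms by (intro add_mono mult_left_mono) auto
  also have "\<dots> = (1-t) * h a + t * h b + e" by (simp add: algebra_simps)
  finally show "h ((1-t)*a + t*b) \<le> (1-t) * h a + t * h b + e" .
qed

lemma slope3:
  assumes "0 \<le> r" "r < s" "s < u"
  shows "(h s - h r) * (u - s) \<le> (h u - h s) * (s - r)"
proof -
  define t where "t = (s - r) / (u - r)"
  have t: "0 \<le> t" "t \<le> 1" using assms by (auto simp: t_def)
  have tu: "t * (u - r) = s - r" using assms by (simp add: t_def)
  have st: "s = (1-t)*r + t*u" using tu by (simp add: algebra_simps)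
  have "h s \<le> (1-t) * h r + t * h u" using h_conv[of r u t] assms t st by simp
  then have "(u - r) * h s \<le> (u - r) * ((1-t) * h r + t * h u)" using assms by (intro mult_left_mono) auto
  also have "\<dots> = ((u-r) - t*(u-r)) * h r + (t*(u-r)) * h u" by (simp add: algebra_simps)
  also have "\<dots> = (u - s) * h r + (s - r) * h u" using tu by simp
  finally show ?thesis by (simp add: algebra_simps)
qed

lemma h_unb: "\<exists>s\<ge>0. h s < M"
proof -
  obtain y where "f y < M" using unb by (meson bdd_belowI2 not_le rangeI)
  moreover have "h (dist x0 y) \<le> f y" by (rule h_le) simp
  ultimately show ?thesis by (intro exI[of _ "dist x0 y"]) auto
qed

lemma h_strict: assumes "0 \<le> r" "r < s" shows "h s < h r"
proof (rule ccontr)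
  assume "\<not> ?thesis"
  then have eq: "h s = h r" using h_mono[of r s] assms by simp
  have "h s \<le> h u" if "u \<ge> 0" for u
  proof (cases "u \<le> s")
    case True then show ?thesis using h_mono[of u s] that by simp
  next
    case False
    have "(h s - h r) * (u - s) \<le> (h u - h s) * (s - r)" using slope3[of r s u] assms False by simp
    then have "0 \<le> (h u - h s) * (s - r)" using eq by simp
    then show ?thesis using assms by (simp add: zero_le_mult_iff)
  qed
  then show False using h_unb[of "h s"] by force
qed

lemma key:
  assumes s: "s > 0" and a: "a > 0" and sl: "\<And>r. 0 \<le> r \<Longrightarrow> r \<le> s \<Longrightarrow> h s + a * (s - r) \<le> h r"
    and u: "u \<in> cball x0 s" and v: "v \<in> cball x0 s"
  shows "a * (dist u v)\<^sup>2 \<le> 4 * s * (f u + f v - 2 * h s)"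
proof -
  obtain m where m: "dist u m = (1/2) * dist u v" "dist m v = (1 - 1/2) * dist u v"
    using geod_exists[OF H, of "1/2"] by auto
  define D where "D = dist u v"
  define r where "r = dist x0 m"
  have "r\<^sup>2 \<le> (dist x0 u)\<^sup>2 / 2 + (dist x0 v)\<^sup>2 / 2 - D\<^sup>2 / 4"
    using midpoint_ineq[OF H, of u m v x0] m unfolding r_def D_def by simp
  also have "\<dots> \<le> s\<^sup>2 / 2 + s\<^sup>2 / 2 - D\<^sup>2 / 4"
    using u v by (intro diff_mono add_mono divide_right_mono power_mono) (auto simp: D_def)
  finally have r2: "r\<^sup>2 \<le> s\<^sup>2 - D\<^sup>2/4" by simp
  have r0: "0 \<le> r" by (simp add: r_def)
  have rs: "r \<le> s"
  proof -
    have "0 \<le> D\<^sup>2/4" by simp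
    then have "r\<^sup>2 \<le> s\<^sup>2" using r2 by linarith
    then show ?thesis using s r0 power2_le_imp_le by force
  qed
  have fm: "f m \<le> (1 - 1/2) * f u + (1/2) * f v" by (rule geod_convex_pt[OF H cvx _ _ m]) auto
  have "h s + a * (s - r) \<le> h r" using sl r0 rs by blast
  also have "h r \<le> f m" by (rule h_le) (simp add: r_def)
  finally have 1: "a * (s - r) \<le> (f u + f v)/2 - h s" using fm by (simp add: field_simps)
  have "D\<^sup>2 / 4 \<le> (s - r) * (s + r)" using r2 by (simp add: power2_eq_square algebra_simps)
  also have "\<dots> \<le> (s - r) * (2 * s)" using rs r0 by (intro mult_left_mono) auto
  finally have 2: "D\<^sup>2 \<le> 8 * s * (s - r)" by (simp add: algebra_simps)
  have "a * D\<^sup>2 \<le> a * (8 * s * (s - r))" using 2 a by (intro mult_left_mono) auto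
  also have "\<dots> = 8 * s * (a * (s - r))" by simp
  also have "\<dots> \<le> 8 * s * ((f u + f v)/2 - h s)" using 1 s by (intro mult_left_mono) auto
  finally show ?thesis unfolding D_def by (simp add: algebra_simps)
qed

lemma slope_pos: assumes "s > 0" shows "\<exists>c>0. \<forall>r. 0 \<le> r \<longrightarrow> r \<le> s \<longrightarrow> h s + c * (s - r) \<le> h r"
proof -
  define c where "c = h s - h (s+1)"
  have c: "c > 0" using h_strict[of s "s+1"] assms by (simp add: c_def)
  have "h s + c * (s - r) \<le> h r" if "0 \<le> r" "r \<le> s" for r
  proof (cases "r = s")
    case False
    then have "(h s - h r) * ((s+1) - s) \<le> (h (s+1) - h s) * (s - r)" using slope3[of r s "s+1"] that by simp
    then show ?thesis by (simp add: c_def algebra_simps)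
  qed simp
  then show ?thesis using c by blast
qed

lemma min_exists: assumes "s \<ge> 0" shows "\<exists>x\<in>cball x0 s. f x = h s"
proof (cases "s = 0")
  case True then show ?thesis using h0 by (intro bexI[of _ x0]) auto
next
  case False
  then have s: "s > 0" using assms by simp
  obtain c where c: "c > 0" "\<And>r. 0 \<le> r \<Longrightarrow> r \<le> s \<Longrightarrow> h s + c * (s - r) \<le> h r"
    using slope_pos[OF s] by blast
  have "\<forall>n. \<exists>y\<in>cball x0 s. f y < h s + inverse (real (Suc n))"
    using h_near[OF assms] by simp
  then obtain z where z: "\<And>n. z n \<in> cball x0 s" "\<And>n. f (z n) < h s + inverse (real (Suc n))"
    by metis
  have zl: "h s \<le> f (z n)" for n using h_le[OF z(1)] .
  have "Cauchy z"
    unfolding Cauchy_def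
  proof (intro allI impI)
    fix e :: real assume e: "e > 0"
    obtain N where N: "8 * s / (c * e\<^sup>2) < real N" using reals_Archimedean2 by blast
    have ce: "c * e\<^sup>2 > 0" using c e by simp
    have N': "8 * s < c * e\<^sup>2 * real (Suc N)" using N ce by (simp add: field_simps)
    have "dist (z m) (z n) < e" if "m \<ge> N" "n \<ge> N" for m n
    proof -
      have im: "inverse (real (Suc m)) \<le> inverse (real (Suc N))" using that by (simp add: field_simps)
      have inn: "inverse (real (Suc n)) \<le> inverse (real (Suc N))" using that by (simp add: field_simps)
      have fz: "f (z m) + f (z n) - 2 * h s < 2 * inverse (real (Suc N))"
        using z(2)[of m] z(2)[of n] im inn by linarith
      have "c * (dist (z m) (z n))\<^sup>2 \<le> 4 * s * (f (z m) + f (z n) - 2 * h s)"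
        by (rule key[OF s c(1) c(2) z(1) z(1)])
      also have "\<dots> < 4 * s * (2 * inverse (real (Suc N)))"
        using fz s by (intro mult_strict_left_mono) auto
      also have "\<dots> = 8 * s / real (Suc N)" by (simp add: field_simps)
      also have "\<dots> < c * e\<^sup>2" using N' by (simp add: field_simps)
      finally have "(dist (z m) (z n))\<^sup>2 < e\<^sup>2" using c by simp
      then show ?thesis using e by (simp add: power_less_imp_less_base)
    qed
    then show "\<exists>M. \<forall>m\<ge>M. \<forall>n\<ge>M. dist (z m) (z n) < e" by blast
  qed
  then obtain l where l: "z \<longlonglongrightarrow> l"
    using had_complete[OF H] unfolding complete_def by blast
  have lin: "l \<in> cball x0 s"
    using closed_sequential_limits[THEN iffD1, OF closed_cball] z(1) l by blast
  have "(\<lambda>n. f (z n)) \<longlonglongrightarrow> f l"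
    using cont l by (simp add: continuous_on_eq_continuous_at isCont_tendsto_compose)
  moreover have "(\<lambda>n. f (z n)) \<longlonglongrightarrow> h s"
  proof (rule tendsto_sandwich[of "\<lambda>_. h s" _ _ "\<lambda>n. h s + inverse (real (Suc n))"])
    show "\<forall>\<^sub>F n in sequentially. h s \<le> f (z n)" using zl by simp
    show "\<forall>\<^sub>F n in sequentially. f (z n) \<le> h s + inverse (real (Suc n))"
      using z(2) by (simp add: less_imp_le)
    show "(\<lambda>n. h s + inverse (real (Suc n))) \<longlonglongrightarrow> h s"
      by (rule LIMSEQ_inverse_real_of_nat_add)
  qed simp
  ultimately have "f l = h s" using LIMSEQ_unique by blast
  then show ?thesis using lin by blast
qed

lemma min_unique:
  assumes "s \<ge> 0" "u \<in> cball x0 s" "v \<in> cball x0 s" "f u = h s" "f v = h s"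
  shows "u = v"
proof (cases "s = 0")
  case True then show ?thesis using assms by auto
next
  case False
  then have s: "s > 0" using assms by simp
  obtain c where c: "c > 0" "\<And>r. 0 \<le> r \<Longrightarrow> r \<le> s \<Longrightarrow> h s + c * (s - r) \<le> h r"
    using slope_pos[OF s] by blast
  have "c * (dist u v)\<^sup>2 \<le> 4 * s * (f u + f v - 2 * h s)"
    by (rule key[OF s c(1) c(2) assms(2,3)])
  then have "c * (dist u v)\<^sup>2 \<le> 0" using assms by simp
  then have "(dist u v)\<^sup>2 \<le> 0" using c by (simp add: mult_le_0_iff)
  then show ?thesis by simp
qed

lemma bm:
  assumes "s \<ge> 0"
  shows "ball_min f x0 s \<in> cball x0 s" "f (ball_min f x0 s) = h s" "dist x0 (ball_min f x0 s) = s"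
proof -
  obtain x where x: "x \<in> cball x0 s" "f x = h s" using min_exists[OF assms] by blast
  have "ball_min f x0 s = x" unfolding ball_min_def
  proof (rule the_equality)
    show "x \<in> cball x0 s \<and> (\<forall>y\<in>cball x0 s. f x \<le> f y)" using x h_le by auto
    fix y assume y: "y \<in> cball x0 s \<and> (\<forall>y'\<in>cball x0 s. f y \<le> f y')"
    then have "f y = h s" using x h_le[of y s] by force
    then show "y = x" using min_unique[OF assms _ x(1) _ x(2)] y by blast
  qed
  then show 1: "ball_min f x0 s \<in> cball x0 s" and 2: "f (ball_min f x0 s) = h s" using x by auto
  show "dist x0 (ball_min f x0 s) = s"
  proof (rule ccontr)
    assume "dist x0 (ball_min f x0 s) \<noteq> s"
    then have lt: "dist x0 (ball_min f x0 s) < s" using 1 by simp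
    have "h s < h (dist x0 (ball_min f x0 s))" by (rule h_strict[OF _ lt]) simp
    also have "\<dots> \<le> f (ball_min f x0 s)" by (rule h_le) simp
    finally show False using 2 by simp
  qed
qed

definition psi :: "real \<Rightarrow> real" where "psi s = (h s - h 0) / s"

lemma psi_mono: assumes "0 < s" "s \<le> S" shows "psi s \<le> psi S"
proof (cases "s = S")
  case False
  then have "(h s - h 0) * (S - s) \<le> (h S - h s) * (s - 0)" using slope3[of 0 s S] assms by simp
  then have "(h s - h 0) * S \<le> (h S - h 0) * s" by (simp add: algebra_simps)
  then show ?thesis using assms unfolding psi_def by (simp add: divide_simps mult.commute)
qed simp

lemma psi_le0: "0 < s \<Longrightarrow> psi s \<le> 0"
  unfolding psi_def using h_mono[of 0 s] by (simp add: divide_nonpos_pos)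

definition L :: real where "L = (SUP s\<in>{0<..}. psi s)"

lemma psi_bdd: "bdd_above (psi ` {0<..})"
  using psi_le0 by (intro bdd_aboveI2) auto

lemma psi_le_L: "0 < s \<Longrightarrow> psi s \<le> L"
  unfolding L_def by (rule cSUP_upper[OF _ psi_bdd]) simp

lemma psi_lim: "(psi \<longlongrightarrow> L) at_top"
proof (rule order_tendstoI)
  fix a assume "a < L"
  then obtain s0 where s0: "s0 > 0" "a < psi s0"
    unfolding L_def using less_cSUP_iff[OF _ psi_bdd] by force
  show "\<forall>\<^sub>F s in at_top. a < psi s"
    unfolding eventually_at_top_linorder
    using s0 psi_mono by (intro exI[of _ s0]) (auto intro: less_le_trans)
next
  fix a assume "L < a"
  show "\<forall>\<^sub>F s in at_top. psi s < a"
    unfolding eventually_at_top_linorder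
  proof (intro exI[of _ 1] allI impI)
    fix s :: real assume "1 \<le> s"
    then show "psi s < a" using psi_le_L[of s] \<open>L < a\<close> by simp
  qed
qed

lemma hs_lim: "((\<lambda>s. h s / s) \<longlongrightarrow> L) at_top"
proof -
  have "((\<lambda>s. psi s + h 0 * inverse s) \<longlongrightarrow> L + 0) at_top"
    by (intro tendsto_add psi_lim tendsto_mult_right_zero tendsto_inverse_0_at_top filterlim_ident)
  moreover have "\<forall>\<^sub>F s in at_top. psi s + h 0 * inverse s = h s / s"
    unfolding eventually_at_top_linorder
    by (intro exI[of _ 1]) (auto simp: psi_def field_simps)
  ultimately show ?thesis using tendsto_cong by fastforce
qed

lemma slope_L: assumes "0 \<le> r" "r \<le> s" shows "h s - h r \<le> L * (s - r)"
proof (rule ccontr)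
  assume nt: "\<not> ?thesis"
  then have rs: "r < s" using assms by (cases "r = s") auto
  define \<delta> where "\<delta> = (h s - h r) - L * (s - r)"
  have d: "\<delta> > 0" using nt by (simp add: \<delta>_def)
  have s0: "s > 0" using assms rs by simp
  define K where "K = s * (L - psi s) * (s - r)"
  have K: "K \<ge> 0" using psi_le_L[OF s0] rs s0 by (simp add: K_def)
  define S where "S = s + (K / \<delta> + 1)"
  have Ss: "S - s = K / \<delta> + 1" by (simp add: S_def)
  have "K / \<delta> \<ge> 0" using K d by simp
  then have Spos: "S > s" by (simp add: S_def)
  have 1: "(h s - h r) * (S - s) \<le> (h S - h s) * (s - r)" using slope3[OF assms(1) rs Spos] .
  have hS: "h S - h 0 \<le> L * S" using psi_le_L[of S] Spos s0 by (simp add: psi_def divide_simps mult.commute)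
  have hs: "h s - h 0 = psi s * s" using s0 by (simp add: psi_def)
  have "(h S - h s) * (s - r) \<le> (L * S - psi s * s) * (s - r)"
    using hS hs rs by (intro mult_right_mono) auto
  with 1 have "(L * (s - r) + \<delta>) * (S - s) \<le> (L * S - psi s * s) * (s - r)"
    by (simp add: \<delta>_def)
  then have "\<delta> * (S - s) \<le> K" by (simp add: K_def algebra_simps)
  also have "\<delta> * (S - s) = K + \<delta>" using d by (simp add: Ss field_simps)
  finally show False using d by simp
qed

lemma dl_iff: "decreases_linearly f x0 \<longleftrightarrow> L < 0"
proof -
  have "Liminf at_top (\<lambda>s::real. ereal (f (ball_min f x0 s) / s)) = Liminf at_top (\<lambda>s. ereal (h s / s))"
    by (rule Liminf_eq) (auto simp: eventually_at_top_linorder bm intro!: exI[of _ 0])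
  also have "\<dots> = ereal L"
    by (rule lim_imp_Liminf) (auto intro: tendsto_ereal hs_lim)
  finally show ?thesis unfolding decreases_linearly_def by simp
qed

lemma gam_on:
  assumes "0 \<le> t" "t \<le> s" "s \<le> S"
  shows "dist x0 (gamma_s f x0 S s) = s" "dist (gamma_s f x0 S s) (ball_min f x0 S) = S - s"
    "dist (gamma_s f x0 S t) (gamma_s f x0 S s) = s - t" "dist x0 (gamma_s f x0 S t) = t"
proof -
  have S0: "S \<ge> 0" using assms by simp
  obtain \<gamma> where j: "joins \<gamma> x0 (ball_min f x0 S)" using had_joins[OF H] by blast
  have dS: "dist x0 (ball_min f x0 S) = S" using bm(3)[OF S0] .
  have e1: "gamma_s f x0 S s = \<gamma> s" unfolding gamma_s_def
    using geod_pt_eq[OF H j, of s] assms dS by simp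
  have e2: "gamma_s f x0 S t = \<gamma> t" unfolding gamma_s_def
    using geod_pt_eq[OF H j, of t] assms dS by simp
  show "dist x0 (gamma_s f x0 S s) = s" "dist (gamma_s f x0 S s) (ball_min f x0 S) = S - s"
    using joins_dist[OF j, of s] assms dS e1 by auto
  show "dist (gamma_s f x0 S t) (gamma_s f x0 S s) = s - t"
    using joins_dist2[OF j, of t s] assms dS e1 e2 by auto
  show "dist x0 (gamma_s f x0 S t) = t"
    using joins_dist[OF j, of t] assms dS e2 by auto
qed

lemma cauchy_bound:
  assumes Ln: "L < 0" and t: "0 \<le> t" "t \<le> s" "s \<le> S" and s0: "s > 0"
  shows "dist (gamma_s f x0 s t) (gamma_s f x0 S t) \<le> 2 * t * sqrt ((L - psi s) / (- L))"
proof -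
  define a where "a = - L"
  have a: "a > 0" using Ln by (simp add: a_def)
  have sl: "h s + a * (s - r) \<le> h r" if "0 \<le> r" "r \<le> s" for r
    using slope_L[OF that] by (simp add: a_def algebra_simps)
  define y where "y = gamma_s f x0 S s"
  note g = gam_on[OF t]
  have S0: "S > 0" using t s0 by simp
  have ycb: "y \<in> cball x0 s" using g(1) by (simp add: y_def)
  have bcb: "ball_min f x0 s \<in> cball x0 s" using bm(1) s0 by simp
  define D where "D = dist (ball_min f x0 s) y"
  have "a * D\<^sup>2 \<le> 4 * s * (f (ball_min f x0 s) + f y - 2 * h s)"
    unfolding D_def by (rule key[OF s0 a sl bcb ycb])
  also have "\<dots> = 4 * s * (f y - h s)" using bm(2)[of s] s0 by simp
  also have "\<dots> \<le> 4 * s * (s * (L - psi s))"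
  proof -
    have l: "0 \<le> s/S" "s/S \<le> 1" using t S0 by auto
    have "f y \<le> (1 - s/S) * f x0 + (s/S) * f (ball_min f x0 S)"
    proof (rule geod_convex_pt[OF H cvx l])
      have bS: "dist x0 (ball_min f x0 S) = S" using bm(3)[of S] S0 by simp
      show "dist x0 y = s / S * dist x0 (ball_min f x0 S)" using g(1) bS S0 by (simp add: y_def)
      have "(1 - s/S) * S = S - s" using S0 by (simp add: field_simps)
      then show "dist y (ball_min f x0 S) = (1 - s / S) * dist x0 (ball_min f x0 S)"
        using g(2) bS by (simp add: y_def)
    qed
    also have "\<dots> = (1 - s/S) * h 0 + (s/S) * h S" using bm(2)[of S] S0 h0 by simp
    finally have fy: "f y \<le> (1 - s/S) * h 0 + (s/S) * h S" .
    have "(1 - s/S) * h 0 + (s/S) * h S - h s = s * psi S - s * psi s"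
      using S0 s0 by (simp add: psi_def field_simps)
    also have "\<dots> \<le> s * L - s * psi s" using psi_le_L[OF S0] s0 by simp
    finally have "f y - h s \<le> s * (L - psi s)" using fy by (simp add: algebra_simps)
    then show ?thesis using s0 by (intro mult_left_mono) auto
  qed
  finally have "a * D\<^sup>2 \<le> (2 * s)\<^sup>2 * (L - psi s)" by (simp add: power2_eq_square algebra_simps)
  then have "D\<^sup>2 \<le> (2 * s)\<^sup>2 * ((L - psi s) / a)" using a by (simp add: field_simps)
  then have "sqrt (D\<^sup>2) \<le> sqrt ((2 * s)\<^sup>2 * ((L - psi s) / a))" by (rule real_sqrt_le_mono)
  moreover have "sqrt ((2 * s)\<^sup>2 * ((L - psi s) / a)) = sqrt ((2 * s)\<^sup>2) * sqrt ((L - psi s) / a)"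
    by (rule real_sqrt_mult)
  moreover have "sqrt ((2 * s)\<^sup>2) = 2 * s" using s0 by (simp only: real_sqrt_abs abs_of_pos)
  moreover have "sqrt (D\<^sup>2) = D" by (simp add: D_def)
  ultimately have D: "D \<le> 2 * s * sqrt ((L - psi s) / a)" by simp
  have "dist (gamma_s f x0 s t) (gamma_s f x0 S t) \<le> (t/s) * dist (ball_min f x0 s) y"
  proof (rule comparison[OF H, of "t/s" x0])
    show "0 \<le> t/s" "t/s \<le> 1" using t s0 by auto
    have gs: "dist x0 (gamma_s f x0 s t) = t" "dist (gamma_s f x0 s t) (ball_min f x0 s) = s - t"
      using gam_on[of t t s] t by auto
    have ts: "(1 - t/s) * s = s - t" "t / s * s = t" using s0 by (simp_all add: field_simps)
    have bs: "dist x0 (ball_min f x0 s) = s" using bm(3)[of s] s0 by simp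
    show "dist x0 (gamma_s f x0 s t) = t / s * dist x0 (ball_min f x0 s)"
      "dist (gamma_s f x0 s t) (ball_min f x0 s) = (1 - t / s) * dist x0 (ball_min f x0 s)"
      using gs bs ts by simp_all
    show "dist x0 (gamma_s f x0 S t) = t / s * dist x0 y"
      "dist (gamma_s f x0 S t) y = (1 - t / s) * dist x0 y"
      using g(1,3,4) ts by (simp_all add: y_def)
  qed
  also have "\<dots> \<le> (t/s) * (2 * s * sqrt ((L - psi s) / a))"
    using D t s0 unfolding D_def by (intro mult_left_mono) auto
  also have "\<dots> = 2 * t * sqrt ((L - psi s) / a)" using s0 by simp
  finally show ?thesis by (simp add: a_def)
qed


lemma gamma_conv:
  assumes Ln: "L < 0" and t: "t \<ge> 0"
  shows "\<exists>p. ((\<lambda>s. gamma_s f x0 s t) \<longlongrightarrow> p) at_top"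
proof -
  define e where "e s = 2 * t * sqrt ((L - psi s) / (- L))" for s
  have el: "(e \<longlongrightarrow> 0) at_top"
  proof -
    have "(e \<longlongrightarrow> 2 * t * sqrt ((L - L) / (- L))) at_top"
      unfolding e_def by (intro tendsto_intros psi_lim) (use Ln in simp)
    then show ?thesis by simp
  qed
  have cb: "dist (gamma_s f x0 s t) (gamma_s f x0 S t) \<le> e s" if "t + 1 \<le> s" "s \<le> S" for s S
    unfolding e_def by (rule cauchy_bound[OF Ln]) (use that t in auto)
  show ?thesis by (rule conv_from_bound[OF had_complete[OF H] el cb])
qed

end

lemma gamma_compare:
  assumes F: "hconv f" and G: "hconv g" and C: "\<And>x. \<bar>f x - g x\<bar> \<le> C"
    and Ln: "hconv.L f x0 < 0" and t: "0 \<le> t" "t \<le> s" and s0: "s > 0"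
  shows "dist (gamma_s f x0 s t) (gamma_s g x0 s t) \<le> (t/s) * sqrt (8 * C * s / (- hconv.L f x0))"
proof -
  interpret F: hconv f x0 by (rule F)
  interpret G: hconv g x0 by (rule G)
  define a where "a = - F.L"
  have a: "a > 0" using Ln by (simp add: a_def)
  have sl: "F.h s + a * (s - r) \<le> F.h r" if "0 \<le> r" "r \<le> s" for r
    using F.slope_L[OF that] by (simp add: a_def algebra_simps)
  define u where "u = ball_min f x0 s"
  define v where "v = ball_min g x0 s"
  have ucb: "u \<in> cball x0 s" using F.bm(1) s0 by (simp add: u_def)
  have vcb: "v \<in> cball x0 s" using G.bm(1) s0 by (simp add: v_def)
  have ghf: "G.h s \<le> F.h s + C"
  proof -
    have "G.h s - C \<le> F.h s"
    proof (rule F.h_ge)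
      fix y assume "y \<in> cball x0 s"
      then have "G.h s \<le> g y" by (rule G.h_le)
      then show "G.h s - C \<le> f y" using C[of y] by linarith
    qed (use s0 in simp)
    then show ?thesis by simp
  qed
  define D where "D = dist u v"
  have "a * D\<^sup>2 \<le> 4 * s * (f u + f v - 2 * F.h s)"
    unfolding D_def by (rule F.key[OF s0 a sl ucb vcb])
  also have "\<dots> \<le> 4 * s * (2 * C)"
  proof -
    have "f u = F.h s" using F.bm(2) s0 by (simp add: u_def)
    moreover have "g v = G.h s" using G.bm(2) s0 by (simp add: v_def)
    moreover have "f v \<le> g v + C" using C[of v] by linarith
    ultimately have "f u + f v - 2 * F.h s \<le> 2 * C" using ghf by linarith
    then show ?thesis using s0 by (intro mult_left_mono) auto
  qed
  finally have "D\<^sup>2 \<le> 8 * C * s / a" using a by (simp add: field_simps)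
  then have "sqrt (D\<^sup>2) \<le> sqrt (8 * C * s / a)" by (rule real_sqrt_le_mono)
  then have D: "D \<le> sqrt (8 * C * s / a)" by (simp add: D_def)
  have "dist (gamma_s f x0 s t) (gamma_s g x0 s t) \<le> (t/s) * dist u v"
  proof (rule comparison[OF F.H, of "t/s" x0])
    show "0 \<le> t/s" "t/s \<le> 1" using t s0 by auto
    have ts: "(1 - t/s) * s = s - t" "t / s * s = t" using s0 by (simp_all add: field_simps)
    have us: "dist x0 u = s" using F.bm(3)[of s] s0 by (simp add: u_def)
    have vs: "dist x0 v = s" using G.bm(3)[of s] s0 by (simp add: v_def)
    show "dist x0 (gamma_s f x0 s t) = t / s * dist x0 u"
      "dist (gamma_s f x0 s t) u = (1 - t / s) * dist x0 u"
      using F.gam_on[of t t s] t us ts by (simp_all add: u_def)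
    show "dist x0 (gamma_s g x0 s t) = t / s * dist x0 v"
      "dist (gamma_s g x0 s t) v = (1 - t / s) * dist x0 v"
      using G.gam_on[of t t s] t vs ts by (simp_all add: v_def)
  qed
  also have "\<dots> \<le> (t/s) * sqrt (8 * C * s / a)"
    using D t s0 unfolding D_def by (intro mult_left_mono) auto
  finally show ?thesis by (simp add: a_def)
qed

theorem lemma4p7:
  fixes f g :: "'a::metric_space \<Rightarrow> real" and x0 :: 'a
  assumes "hadamard_space TYPE('a)"
    and "locally_compact_space TYPE('a)"
    and "continuous_on UNIV f" and "geod_convex f"
    and "\<not> bdd_below (range f)" and "decreases_linearly f x0"
    and "continuous_on UNIV g" and "geod_convex g"
    and "\<exists>C. \<forall>x. \<bar>f x - g x\<bar> \<le> C"
  shows "\<not> bdd_below (range g) \<and> decreases_linearly g x0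
    \<and> (\<forall>t\<ge>0. \<exists>p. ((\<lambda>s. gamma_s f x0 s t) \<longlongrightarrow> p) at_top
                 \<and> ((\<lambda>s. gamma_s g x0 s t) \<longlongrightarrow> p) at_top)
    \<and> (\<exists>a. ((\<lambda>s::real. - (INF x\<in>cball x0 s. f x) / s) \<longlongrightarrow> a) at_top
         \<and> ((\<lambda>s::real. - (INF x\<in>cball x0 s. g x) / s) \<longlongrightarrow> a) at_top)"
proof -
  from assms(9) obtain C where C: "\<And>x. \<bar>f x - g x\<bar> \<le> C" by blast
  have ng: "\<not> bdd_below (range g)"
  proof
    assume "bdd_below (range g)"
    then obtain m where m: "\<And>x. m \<le> g x" by (meson bdd_below.E rangeI)
    have "m - C \<le> f x" for x using m[of x] C[of x] by linarith
    then have "bdd_below (range f)" by (intro bdd_belowI2)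
    then show False using assms(5) by simp
  qed
  have Fh: "hconv f" using assms(1,3,4,5) by unfold_locales
  have Gh: "hconv g" using assms(1,7,8) ng by unfold_locales
  interpret F: hconv f x0 by (rule Fh)
  interpret G: hconv g x0 by (rule Gh)
  have hfg: "\<bar>G.h s - F.h s\<bar> \<le> C" if "s \<ge> 0" for s
  proof -
    have "G.h s - C \<le> F.h s"
    proof (rule F.h_ge[OF that])
      fix y assume "y \<in> cball x0 s"
      then have "G.h s \<le> g y" by (rule G.h_le)
      then show "G.h s - C \<le> f y" using C[of y] by linarith
    qed
    moreover have "F.h s - C \<le> G.h s"
    proof (rule G.h_ge[OF that])
      fix y assume "y \<in> cball x0 s"
      then have "F.h s \<le> f y" by (rule F.h_le)
      then show "F.h s - C \<le> g y" using C[of y] by linarith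
    qed
    ultimately show ?thesis by linarith
  qed
  have LL: "G.L = F.L"
  proof -
    have 1: "((\<lambda>s. G.h s / s - F.h s / s) \<longlongrightarrow> G.L - F.L) at_top"
      by (intro tendsto_diff G.hs_lim F.hs_lim)
    have 2: "((\<lambda>s. G.h s / s - F.h s / s) \<longlongrightarrow> 0) at_top"
    proof (rule tendsto_sandwich[of "\<lambda>s. - (C * inverse s)" _ _ "\<lambda>s. C * inverse s"])
      have "- (C * inverse s) \<le> G.h s / s - F.h s / s \<and> G.h s / s - F.h s / s \<le> C * inverse s"
        if "s \<ge> 1" for s
      proof -
        have "\<bar>G.h s - F.h s\<bar> \<le> C" using hfg that by simp
        then have "\<bar>G.h s - F.h s\<bar> / s \<le> C / s" using that by (simp add: divide_right_mono)
        moreover have "\<bar>G.h s - F.h s\<bar> / s = \<bar>G.h s / s - F.h s / s\<bar>"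
          using that by (simp add: diff_divide_distrib[symmetric])
        ultimately show ?thesis by (simp add: divide_inverse abs_le_iff)
      qed
      then show "\<forall>\<^sub>F s in at_top. - (C * inverse s) \<le> G.h s / s - F.h s / s"
        "\<forall>\<^sub>F s in at_top. G.h s / s - F.h s / s \<le> C * inverse s"
        unfolding eventually_at_top_linorder by blast+
      have "((\<lambda>s. C * inverse s) \<longlongrightarrow> 0) at_top"
        by (intro tendsto_mult_right_zero tendsto_inverse_0_at_top filterlim_ident)
      then show "((\<lambda>s. C * inverse s) \<longlongrightarrow> 0) at_top"
        "((\<lambda>s. - (C * inverse s)) \<longlongrightarrow> 0) at_top"
        using tendsto_minus[of "\<lambda>s. C * inverse s" 0 at_top] by simp_all
    qed
    from tendsto_unique[OF _ 1 2] show ?thesis by simp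
  qed
  have Ln: "F.L < 0" using assms(6) F.dl_iff by simp
  have dlg: "decreases_linearly g x0" using G.dl_iff LL Ln by simp
  have gam: "\<exists>p. ((\<lambda>s. gamma_s f x0 s t) \<longlongrightarrow> p) at_top
                 \<and> ((\<lambda>s. gamma_s g x0 s t) \<longlongrightarrow> p) at_top" if t: "t \<ge> 0" for t
  proof -
    obtain p where p: "((\<lambda>s. gamma_s f x0 s t) \<longlongrightarrow> p) at_top" using F.gamma_conv[OF Ln t] by blast
    define K where "K = t * sqrt (8 * C / (- F.L))"
    have bnd: "dist (gamma_s g x0 s t) p \<le> K * inverse (sqrt s) + dist (gamma_s f x0 s t) p"
      if "s \<ge> t + 1" for s
    proof -
      have s0: "s > 0" using that t by simp
      have "dist (gamma_s f x0 s t) (gamma_s g x0 s t) \<le> (t/s) * sqrt (8 * C * s / (- F.L))"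
        by (rule gamma_compare[OF Fh Gh C Ln]) (use that t in auto)
      also have "(t/s) * sqrt (8 * C * s / (- F.L)) = K * inverse (sqrt s)"
      proof -
        have e0: "8 * C * s / (- F.L) = 8 * C / (- F.L) * s" by (simp add: divide_inverse ac_simps)
        have e1: "sqrt (8 * C * s / (- F.L)) = sqrt (8 * C / (- F.L)) * sqrt s"
          unfolding e0 by (rule real_sqrt_mult)
        have ss: "sqrt s * sqrt s = s" using s0 by simp
        have sp: "sqrt s > 0" using s0 by simp
        have "sqrt s / s = sqrt s / (sqrt s * sqrt s)" using ss by simp
        also have "\<dots> = inverse (sqrt s)" using sp by (simp add: field_simps)
        finally have e2: "sqrt s / s = inverse (sqrt s)" .
        have "(t/s) * (sqrt (8 * C / (- F.L)) * sqrt s) = t * sqrt (8 * C / (- F.L)) * (sqrt s / s)"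
          by (simp add: divide_inverse ac_simps)
        then show ?thesis unfolding e1 e2 K_def .
      qed
      finally have "dist (gamma_s f x0 s t) (gamma_s g x0 s t) \<le> K * inverse (sqrt s)" .
      then show ?thesis using dist_triangle[of "gamma_s g x0 s t" p "gamma_s f x0 s t"]
        by (simp add: dist_commute)
    qed
    have "((\<lambda>s. dist (gamma_s g x0 s t) p) \<longlongrightarrow> 0) at_top"
    proof (rule tendsto_sandwich[of "\<lambda>_. 0" _ _ "\<lambda>s. K * inverse (sqrt s) + dist (gamma_s f x0 s t) p"])
      show "\<forall>\<^sub>F s in at_top. dist (gamma_s g x0 s t) p \<le> K * inverse (sqrt s) + dist (gamma_s f x0 s t) p"
        unfolding eventually_at_top_linorder using bnd by blast
      have "((\<lambda>s. K * inverse (sqrt s)) \<longlongrightarrow> 0) at_top"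
        by (intro tendsto_mult_right_zero tendsto_inverse_0_at_top sqrt_at_top)
      moreover have "((\<lambda>s. dist (gamma_s f x0 s t) p) \<longlongrightarrow> 0) at_top"
        using tendsto_dist_iff[THEN iffD1, OF p] .
      ultimately have "((\<lambda>s. K * inverse (sqrt s) + dist (gamma_s f x0 s t) p) \<longlongrightarrow> 0 + 0) at_top"
        by (rule tendsto_add)
      then show "((\<lambda>s. K * inverse (sqrt s) + dist (gamma_s f x0 s t) p) \<longlongrightarrow> 0) at_top" by simp
      show "\<forall>\<^sub>F s in at_top. 0 \<le> dist (gamma_s g x0 s t) p" by simp
      show "((\<lambda>_. 0::real) \<longlongrightarrow> 0) at_top" by simp
    qed
    then have "((\<lambda>s. gamma_s g x0 s t) \<longlongrightarrow> p) at_top" by (rule tendsto_dist_iff[THEN iffD2])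
    then show ?thesis using p by blast
  qed
  have inf: "\<exists>a. ((\<lambda>s::real. - (INF x\<in>cball x0 s. f x) / s) \<longlongrightarrow> a) at_top
         \<and> ((\<lambda>s::real. - (INF x\<in>cball x0 s. g x) / s) \<longlongrightarrow> a) at_top"
  proof (intro exI conjI)
    show "((\<lambda>s::real. - (INF x\<in>cball x0 s. f x) / s) \<longlongrightarrow> - F.L) at_top"
      using tendsto_minus[OF F.hs_lim] unfolding F.h_def minus_divide_left .
    show "((\<lambda>s::real. - (INF x\<in>cball x0 s. g x) / s) \<longlongrightarrow> - F.L) at_top"
      using tendsto_minus[OF G.hs_lim] unfolding G.h_def minus_divide_left LL .
  qed
  show ?thesis using ng dlg gam inf by blast
qed


end
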